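(* Problem (RO-$\Sigma$) has an optimal solution $(B,\beta_1,\ldots,\beta_B)$ such that $c\prec_{\beta_1\cdots\beta_B}c'$ for all contests $c<c'$ with $c\equiv c'$.
   Context: A ballot style consists of contests $\mathcal{C}=\{1,\ldots,C\}$, candidates $\mathcal{N}=\{1,\ldots,N\}$ partitioned into nonempty sets $\mathcal{N}_c$ ($c\in\mathcal{C}$), and positive integers $v_c$. A filled-out ballot is a subset $\beta\subseteq\mathcal{N}$; $\mathscr{B}=\{\beta\subseteq\mathcal{N}: |\mathcal{N}_c\cap\beta|\le v_c\ \forall c\}$. For $i\in\mathcal{N}_c$: $T^*_i(\beta_1,\ldots,\beta_B)=\sum_{b=1}^B\mathbb{I}\{i\in\beta_b\text{ and }|\mathcal{N}_c\cap\beta_b|\le v_c\}$, and for a bijection $\sigma$ of $\mathcal{N}$, $T^\sigma_i(\beta_1,\ldots,\beta_B)=\sum_{b=1}^B\mathbb{I}\{\sigma(i)\in\beta_b\text{ and }|\{\sigma(j)\in\beta_b: j\in\mathcal{N}_c\}|\le v_c\}$. $\Sigma$ is the set of non-identity bijections $\mathcal{N}\to\mathcal{N}$. Problem (RO-$\Sigma$): minimize $B$ over $B\in\mathbb{N}$ and $\beta_1,\ldots,\beta_B\in\mathscr{B}$ subject to $T^\sigma(\beta_1,\ldots,\beta_B)\neq T^*(\beta_1,\ldots,\beta_B)$ for all $\sigma\in\Sigma$. Two contests $c,c'$ are equivalent, $c\equiv c'$, iff $|\mathcal{N}_c|=|\mathcal{N}_{c'}|$ and $v_c=v_{c'}$.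 $\mathcal{N}_c^k$ denotes the candidate with the $k$-th smallest index in $\mathcal{N}_c$. With $n(i)=|\{b\in\{1,\ldots,B\}: i\in\beta_b\}|$, we write $c\prec_{\beta_1\cdots\beta_B}c'$ iff $c\equiv c'$ and there exists $k\in\{1,\ldots,|\mathcal{N}_c|\}$ with $n(\mathcal{N}_c^{m})=n(\mathcal{N}_{c'}^{m})$ for all $m\in\{k+1,\ldots,|\mathcal{N}_c|\}$ and $n(\mathcal{N}_c^{k})<n(\mathcal{N}_{c'}^{k})$. *)

theory Defs
  imports Main
begin

definition ballot_style :: "nat \<Rightarrow> nat \<Rightarrow> (nat \<Rightarrow> nat set) \<Rightarrow> (nat \<Rightarrow> nat) \<Rightarrow> bool" where
  "ballot_style C N Nc v \<longleftrightarrow>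
     (\<forall>c\<in>{1..C}. Nc c \<noteq> {} \<and> v c > 0) \<and>
     (\<forall>c\<in>{1..C}. \<forall>c'\<in>{1..C}. c \<noteq> c' \<longrightarrow> Nc c \<inter> Nc c' = {}) \<and>
     (\<Union>c\<in>{1..C}. Nc c) = {1..N}"

definition valid_ballots :: "nat \<Rightarrow> nat \<Rightarrow> (nat \<Rightarrow> nat set) \<Rightarrow> (nat \<Rightarrow> nat) \<Rightarrow> nat set set" where
  "valid_ballots C N Nc v = {\<beta>. \<beta> \<subseteq> {1..N} \<and> (\<forall>c\<in>{1..C}. card (Nc c \<inter> \<beta>) \<le> v c)}"

definition contest_of :: "nat \<Rightarrow> (nat \<Rightarrow> nat set) \<Rightarrow> nat \<Rightarrow> nat" where
  "contest_of C Nc i = (THE c. c \<in> {1..C} \<and> i \<in> Nc c)"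

text \<open>T^sigma_i(beta_1..beta_B), with the ballots given as a list (B = its length).
  T^* is T^id.\<close>
definition Tsig :: "nat \<Rightarrow> (nat \<Rightarrow> nat set) \<Rightarrow> (nat \<Rightarrow> nat) \<Rightarrow> (nat \<Rightarrow> nat) \<Rightarrow> nat set list \<Rightarrow> nat \<Rightarrow> nat" where
  "Tsig C Nc v \<sigma> bs i =
     (\<Sum>b<length bs.
        if \<sigma> i \<in> bs ! b \<and>
           card {\<sigma> j | j. j \<in> Nc (contest_of C Nc i) \<and> \<sigma> j \<in> bs ! b} \<le> v (contest_of C Nc i)
        then 1 else 0)"

definition Tstar :: "nat \<Rightarrow> (nat \<Rightarrow> nat set) \<Rightarrow> (nat \<Rightarrow> nat) \<Rightarrow> nat set list \<Rightarrow> nat \<Rightarrow> nat" where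
  "Tstar C Nc v bs i =
     (\<Sum>b<length bs.
        if i \<in> bs ! b \<and> card (Nc (contest_of C Nc i) \<inter> bs ! b) \<le> v (contest_of C Nc i)
        then 1 else 0)"

definition feasible_RO :: "nat \<Rightarrow> nat \<Rightarrow> (nat \<Rightarrow> nat set) \<Rightarrow> (nat \<Rightarrow> nat) \<Rightarrow> nat set list \<Rightarrow> bool" where
  "feasible_RO C N Nc v bs \<longleftrightarrow>
     (\<forall>\<beta>\<in>set bs. \<beta> \<in> valid_ballots C N Nc v) \<and>
     (\<forall>\<sigma>. bij_betw \<sigma> {1..N} {1..N} \<and> (\<exists>i\<in>{1..N}. \<sigma> i \<noteq> i) \<longrightarrow>
        (\<exists>i\<in>{1..N}. Tsig C Nc v \<sigma> bs i \<noteq> Tstar C Nc v bs i))"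

definition optimal_RO :: "nat \<Rightarrow> nat \<Rightarrow> (nat \<Rightarrow> nat set) \<Rightarrow> (nat \<Rightarrow> nat) \<Rightarrow> nat set list \<Rightarrow> bool" where
  "optimal_RO C N Nc v bs \<longleftrightarrow>
     feasible_RO C N Nc v bs \<and> (\<forall>bs'. feasible_RO C N Nc v bs' \<longrightarrow> length bs \<le> length bs')"

definition contest_equiv :: "(nat \<Rightarrow> nat set) \<Rightarrow> (nat \<Rightarrow> nat) \<Rightarrow> nat \<Rightarrow> nat \<Rightarrow> bool" where
  "contest_equiv Nc v c c' \<longleftrightarrow> card (Nc c) = card (Nc c') \<and> v c = v c'"

definition nvotes :: "nat set list \<Rightarrow> nat \<Rightarrow> nat" where
  "nvotes bs i = card {b. b < length bs \<and> i \<in> bs ! b}"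

definition kth :: "nat set \<Rightarrow> nat \<Rightarrow> nat" where
  "kth S k = sorted_list_of_set S ! (k - 1)"

definition contest_prec :: "(nat \<Rightarrow> nat set) \<Rightarrow> (nat \<Rightarrow> nat) \<Rightarrow> nat set list \<Rightarrow> nat \<Rightarrow> nat \<Rightarrow> bool" where
  "contest_prec Nc v bs c c' \<longleftrightarrow>
     contest_equiv Nc v c c' \<and>
     (\<exists>k\<in>{1..card (Nc c)}.
        (\<forall>m\<in>{k+1..card (Nc c)}. nvotes bs (kth (Nc c) m) = nvotes bs (kth (Nc c') m)) \<and>
        nvotes bs (kth (Nc c) k) < nvotes bs (kth (Nc c') k))"

end

theory Submission
  imports Defs
begin

definition dsum :: "(nat \<Rightarrow> nat) \<Rightarrow> nat \<Rightarrow> nat \<Rightarrow> nat" where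
  "dsum a M K = (\<Sum>m\<in>{1..K}. a m * M ^ m)"

lemma dsum_Suc: "dsum a M (Suc K) = dsum a M K + a (Suc K) * M ^ Suc K"
  unfolding dsum_def by (simp add: sum.cl_ivl_Suc)

lemma dsum_bound: assumes "\<forall>m. a m < M" shows "dsum a M K < M ^ Suc K"
proof (induction K)
  case 0 then show ?case using assms by (simp add: dsum_def) (metis gr_zeroI less_nat_zero_code)
next
  case (Suc K)
  have "a (Suc K) + 1 \<le> M" using assms by (simp add: Suc_le_eq)
  then have "(a (Suc K) + 1) * M ^ Suc K \<le> M * M ^ Suc K" by (rule mult_right_mono) simp
  then show ?case using Suc dsum_Suc[of a M K] by (simp add: algebra_simps)
qed

lemma dsum_div: assumes "\<forall>m. a m < M"
  shows "dsum a M (Suc K) div M ^ Suc K = a (Suc K)" "dsum a M (Suc K) mod M ^ Suc K = dsum a M K"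
proof -
  have b: "dsum a M K < M ^ Suc K" by (rule dsum_bound[OF assms])
  have M0: "M > 0" using assms by (metis gr_zeroI less_nat_zero_code)
  then have P: "M ^ Suc K > 0" by simp
  show "dsum a M (Suc K) div M ^ Suc K = a (Suc K)"
    unfolding dsum_Suc using b P by simp
  show "dsum a M (Suc K) mod M ^ Suc K = dsum a M K"
    unfolding dsum_Suc using b P by simp
qed

lemma dsum_eq: assumes "\<forall>m. a m < M" "\<forall>m. b m < M" "dsum a M K = dsum b M K"
  shows "\<forall>m\<in>{1..K}. a m = b m"
  using assms(3)
proof (induction K)
  case 0 then show ?case by simp
next
  case (Suc K)
  have "a (Suc K) = b (Suc K)" using dsum_div(1)[OF assms(1), of K] dsum_div(1)[OF assms(2), of K] Suc.prems by simp
  moreover have "dsum a M K = dsum b M K" using dsum_div(2)[OF assms(1), of K] dsum_div(2)[OF assms(2), of K] Suc.prems by simp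
  ultimately show ?case using Suc.IH by (auto simp: le_Suc_eq)
qed

lemma dsum_lex: assumes "\<forall>m. a m < M" "\<forall>m. b m < M" "dsum a M K < dsum b M K"
  shows "\<exists>k\<in>{1..K}. (\<forall>m\<in>{k+1..K}. a m = b m) \<and> a k < b k"
  using assms(3)
proof (induction K)
  case 0 then show ?case by (simp add: dsum_def)
next
  case (Suc K)
  have le: "a (Suc K) \<le> b (Suc K)"
    using div_le_mono[OF less_imp_le[OF Suc.prems], of "M ^ Suc K"] dsum_div(1)[OF assms(1), of K] dsum_div(1)[OF assms(2), of K]
    by simp
  show ?case
  proof (cases "a (Suc K) = b (Suc K)")
    case False
    then show ?thesis using le by (intro bexI[of _ "Suc K"]) auto
  next
    case True
    then have "dsum a M K < dsum b M K" using Suc.prems dsum_Suc[of a M K] dsum_Suc[of b M K] by simp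
    then obtain k where k: "k \<in> {1..K}" "\<forall>m\<in>{k+1..K}. a m = b m" "a k < b k" using Suc.IH by blast
    have "\<forall>m\<in>{k+1..Suc K}. a m = b m" using k(2) True by (auto simp: le_Suc_eq)
    then show ?thesis using k by (intro bexI[of _ k]) auto
  qed
qed


lemma kth_mem: assumes "finite S" "m \<in> {1..card S}" shows "kth S m \<in> S"
proof -
  have "m - 1 < length (sorted_list_of_set S)" using assms by auto
  then show ?thesis unfolding kth_def using assms(1) by (metis nth_mem set_sorted_list_of_set)
qed

lemma kth_surj: assumes "finite S" "x \<in> S" shows "\<exists>m\<in>{1..card S}. kth S m = x"
proof -
  have "x \<in> set (sorted_list_of_set S)" using assms by simp
  then obtain k where k: "k < length (sorted_list_of_set S)" "sorted_list_of_set S ! k = x"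
    by (metis in_set_conv_nth)
  then have "Suc k \<in> {1..card S}" "kth S (Suc k) = x" unfolding kth_def by auto
  then show ?thesis by blast
qed

lemma len_filter_rep: "length (filter (\<lambda>\<beta>. j \<in> \<beta>) (concat (map (\<lambda>i. replicate i {i}) [1..<Suc n])))
   = (if 1 \<le> j \<and> j \<le> n then j else 0)"
  by (induction n) (auto simp: filter_replicate)

definition goodperm :: "nat \<Rightarrow> nat \<Rightarrow> (nat \<Rightarrow> nat set) \<Rightarrow> (nat \<Rightarrow> nat) \<Rightarrow> (nat \<Rightarrow> nat) \<Rightarrow> bool" where
  "goodperm C N Nc v p \<longleftrightarrow> (\<forall>x\<in>{1..N}. p x \<in> {1..N} \<and> p (p x) = x) \<and>
     (\<forall>d\<in>{1..C}. \<exists>d'\<in>{1..C}. p ` Nc d = Nc d' \<and> v d' = v d)"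

context
  fixes C N :: nat and Nc :: "nat \<Rightarrow> nat set" and v :: "nat \<Rightarrow> nat"
  assumes BS: "ballot_style C N Nc v"
begin

lemma Nc_sub: "d \<in> {1..C} \<Longrightarrow> Nc d \<subseteq> {1..N}"
  using BS unfolding ballot_style_def by blast

lemma Nc_fin: "d \<in> {1..C} \<Longrightarrow> finite (Nc d)"
  using Nc_sub finite_subset by blast

lemma Nc_ne: "d \<in> {1..C} \<Longrightarrow> Nc d \<noteq> {}"
  using BS unfolding ballot_style_def by blast

lemma Nc_disj: "d \<in> {1..C} \<Longrightarrow> d' \<in> {1..C} \<Longrightarrow> d \<noteq> d' \<Longrightarrow> Nc d \<inter> Nc d' = {}"
  using BS unfolding ballot_style_def by blast

lemma co_eq: "d \<in> {1..C} \<Longrightarrow> i \<in> Nc d \<Longrightarrow> contest_of C Nc i = d"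
  unfolding contest_of_def
  apply (rule the_equality)
   apply simp
  using Nc_disj by blast

lemma co_ex: "i \<in> {1..N} \<Longrightarrow> \<exists>d\<in>{1..C}. i \<in> Nc d"
  using BS unfolding ballot_style_def by blast

lemma co_mem: "i \<in> {1..N} \<Longrightarrow> contest_of C Nc i \<in> {1..C} \<and> i \<in> Nc (contest_of C Nc i)"
  using co_ex co_eq by metis

lemma sum_ind: "(\<Sum>b<(n::nat). if P b then 1 else 0) = (card {b. b < n \<and> P b} :: nat)"
  proof -
  have "{b. b<n \<and> P b} = {b\<in>{..<n}. P b}" by auto
  then have "card {b. b<n \<and> P b} = (\<Sum>b\<in>{b\<in>{..<n}. P b}. 1)" by simp
  also have "\<dots> = (\<Sum>b<n. if P b then 1 else 0)" by (rule sum.inter_filter) simp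
  finally show ?thesis by simp
qed

lemma nvotes_le: "nvotes bs i \<le> length bs"
  unfolding nvotes_def
  by (rule order.trans[OF card_mono[of "{..<length bs}"]]) auto

lemma Tstar_valid:
  assumes "\<forall>\<beta>\<in>set bs. \<beta> \<in> valid_ballots C N Nc v" "i \<in> {1..N}"
  shows "Tstar C Nc v bs i = nvotes bs i"
proof -
  have "\<And>b. b < length bs \<Longrightarrow> card (Nc (contest_of C Nc i) \<inter> bs ! b) \<le> v (contest_of C Nc i)"
    using assms co_mem[OF assms(2)] unfolding valid_ballots_def by auto
  then have "Tstar C Nc v bs i = (\<Sum>b<length bs. if i \<in> bs ! b then 1 else 0)"
    unfolding Tstar_def by (intro sum.cong) auto
  then show ?thesis unfolding nvotes_def sum_ind .
qed

lemma good_bij: "goodperm C N Nc v p \<Longrightarrow> bij_betw p {1..N} {1..N}"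
  unfolding goodperm_def by (intro bij_betw_byWitness[where f'=p]) auto

lemma good_inj: "goodperm C N Nc v p \<Longrightarrow> inj_on p {1..N}"
  using good_bij bij_betw_imp_inj_on by blast

lemma good_co:
  assumes g: "goodperm C N Nc v p" and i: "i \<in> {1..N}"
  shows "contest_of C Nc (p i) \<in> {1..C} \<and> p ` Nc (contest_of C Nc i) = Nc (contest_of C Nc (p i))
     \<and> v (contest_of C Nc (p i)) = v (contest_of C Nc i)"
proof -
  define d where "d = contest_of C Nc i"
  have d: "d \<in> {1..C}" "i \<in> Nc d" using co_mem[OF i] d_def by auto
  obtain d' where d': "d' \<in> {1..C}" "p ` Nc d = Nc d'" "v d' = v d" using g d unfolding goodperm_def by blast
  have "p i \<in> Nc d'" using d d' by blast
  then have "contest_of C Nc (p i) = d'" using co_eq d' by blast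
  then show ?thesis using d d' d_def by simp
qed

lemma Tsig_good:
  assumes val: "\<forall>\<beta>\<in>set bs. \<beta> \<in> valid_ballots C N Nc v" and g: "goodperm C N Nc v p" and i: "i \<in> {1..N}"
  shows "Tsig C Nc v p bs i = nvotes bs (p i)"
proof -
  note gc = good_co[OF g i]
  have "\<And>b. b < length bs \<Longrightarrow> card {p j | j. j \<in> Nc (contest_of C Nc i) \<and> p j \<in> bs ! b} \<le> v (contest_of C Nc i)"
  proof -
    fix b assume b: "b < length bs"
    have "{p j | j. j \<in> Nc (contest_of C Nc i) \<and> p j \<in> bs ! b} = p ` Nc (contest_of C Nc i) \<inter> bs ! b"
      by blast
    also have "\<dots> = Nc (contest_of C Nc (p i)) \<inter> bs ! b" using gc by simp
    finally have eq: "{p j | j. j \<in> Nc (contest_of C Nc i) \<and> p j \<in> bs ! b} = Nc (contest_of C Nc (p i)) \<inter> bs ! b" .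
    show "card {p j | j. j \<in> Nc (contest_of C Nc i) \<and> p j \<in> bs ! b} \<le> v (contest_of C Nc i)"
    proof -
      have "bs ! b \<in> valid_ballots C N Nc v" using val b by auto
      then have "card (Nc (contest_of C Nc (p i)) \<inter> bs ! b) \<le> v (contest_of C Nc (p i))"
        using gc unfolding valid_ballots_def by blast
      then show ?thesis using gc eq by simp
    qed
  qed
  then have "Tsig C Nc v p bs i = (\<Sum>b<length bs. if p i \<in> bs ! b then 1 else 0)"
    unfolding Tsig_def by (intro sum.cong) auto
  then show ?thesis unfolding nvotes_def sum_ind .
qed

lemma nvotes_map:
  assumes g: "goodperm C N Nc v p" and sub: "\<forall>\<beta>\<in>set bs. \<beta> \<subseteq> {1..N}" and i: "i \<in> {1..N}"
  shows "nvotes (map ((`) p) bs) i = nvotes bs (p i)"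
proof -
  have "\<And>b. b < length bs \<Longrightarrow> (i \<in> p ` (bs ! b)) = (p i \<in> bs ! b)"
  proof -
    fix b assume b: "b < length bs"
    then have s: "bs ! b \<subseteq> {1..N}" using sub by auto
    show "(i \<in> p ` (bs ! b)) = (p i \<in> bs ! b)"
    proof
      assume "i \<in> p ` (bs ! b)"
      then obtain x where "x \<in> bs ! b" "i = p x" by blast
      then show "p i \<in> bs ! b" using g s unfolding goodperm_def by auto
    next
      assume "p i \<in> bs ! b"
      moreover have "p (p i) = i" using g i unfolding goodperm_def by auto
      ultimately show "i \<in> p ` (bs ! b)" by (metis imageI)
    qed
  qed
  then show ?thesis unfolding nvotes_def by (intro arg_cong[where f=card]) auto
qed

lemma valid_map:
  assumes g: "goodperm C N Nc v p" and b: "\<beta> \<in> valid_ballots C N Nc v"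
  shows "p ` \<beta> \<in> valid_ballots C N Nc v"
proof -
  have s: "\<beta> \<subseteq> {1..N}" using b unfolding valid_ballots_def by auto
  have "p ` \<beta> \<subseteq> {1..N}" using s g unfolding goodperm_def by auto
  moreover have "card (Nc d \<inter> p ` \<beta>) \<le> v d" if d: "d \<in> {1..C}" for d
  proof -
    obtain d' where d': "d' \<in> {1..C}" "p ` Nc d = Nc d'" "v d' = v d" using g d unfolding goodperm_def by blast
    have "Nc d \<inter> p ` \<beta> \<subseteq> p ` (Nc d' \<inter> \<beta>)"
    proof
      fix x assume x: "x \<in> Nc d \<inter> p ` \<beta>"
      then obtain y where y: "y \<in> \<beta>" "x = p y" by blast
      have "p x \<in> Nc d'" using x d' by blast
      moreover have "p x = y" using y s g unfolding goodperm_def by auto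
      ultimately show "x \<in> p ` (Nc d' \<inter> \<beta>)" using y by blast
    qed
    then have "card (Nc d \<inter> p ` \<beta>) \<le> card (p ` (Nc d' \<inter> \<beta>))"
      using Nc_fin[OF d'(1)] by (intro card_mono) auto
    also have "\<dots> \<le> card (Nc d' \<inter> \<beta>)" by (rule card_image_le) (use Nc_fin[OF d'(1)] in auto)
    also have "\<dots> \<le> v d'" using b d'(1) unfolding valid_ballots_def by auto
    finally show ?thesis using d' by simp
  qed
  ultimately show ?thesis unfolding valid_ballots_def by auto
qed

lemma mem_img:
  assumes g: "goodperm C N Nc v p" and s: "\<beta> \<subseteq> {1..N}" and y: "y \<in> {1..N}"
  shows "(y \<in> p ` \<beta>) = (p y \<in> \<beta>)"
proof
  assume "y \<in> p ` \<beta>"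
  then obtain x where "x \<in> \<beta>" "y = p x" by blast
  then show "p y \<in> \<beta>" using g s unfolding goodperm_def by auto
next
  assume "p y \<in> \<beta>"
  moreover have "p (p y) = y" using g y unfolding goodperm_def by auto
  ultimately show "y \<in> p ` \<beta>" by (metis imageI)
qed

lemma feasible_map:
  assumes g: "goodperm C N Nc v p" and f: "feasible_RO C N Nc v bs"
  shows "feasible_RO C N Nc v (map ((`) p) bs)"
proof -
  define bs' where "bs' = map ((`) p) bs"
  have val: "\<forall>\<beta>\<in>set bs. \<beta> \<in> valid_ballots C N Nc v" using f unfolding feasible_RO_def by auto
  have val': "\<forall>\<beta>\<in>set bs'. \<beta> \<in> valid_ballots C N Nc v" using val valid_map[OF g] unfolding bs'_def by auto
  have sub: "\<forall>\<beta>\<in>set bs. \<beta> \<subseteq> {1..N}" using val unfolding valid_ballots_def by auto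
  have fe: "\<And>\<sigma>. bij_betw \<sigma> {1..N} {1..N} \<Longrightarrow> (\<exists>i\<in>{1..N}. \<sigma> i \<noteq> i) \<Longrightarrow>
      \<exists>i\<in>{1..N}. Tsig C Nc v \<sigma> bs i \<noteq> Tstar C Nc v bs i"
    by (rule mp[OF spec[OF conjunct2[OF f[unfolded feasible_RO_def]]]]) (rule conjI)
  have pp: "\<And>x. x \<in> {1..N} \<Longrightarrow> p (p x) = x \<and> p x \<in> {1..N}" using g unfolding goodperm_def by auto
  have inj: "inj_on p {1..N}" using good_inj[OF g] .
  have main: "\<exists>i\<in>{1..N}. Tsig C Nc v \<sigma> bs' i \<noteq> Tstar C Nc v bs' i"
    if sb: "bij_betw \<sigma> {1..N} {1..N}" and ne: "\<exists>i\<in>{1..N}. \<sigma> i \<noteq> i" for \<sigma>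
  proof -
    define \<sigma>' where "\<sigma>' = p \<circ> \<sigma> \<circ> p"
    have sm: "\<And>x. x \<in> {1..N} \<Longrightarrow> \<sigma> x \<in> {1..N}" by (rule bij_betw_apply[OF sb])
    have b': "bij_betw \<sigma>' {1..N} {1..N}" unfolding \<sigma>'_def
      by (rule bij_betw_trans[OF good_bij[OF g] bij_betw_trans[OF sb good_bij[OF g]]])
    obtain i0 where i0: "i0 \<in> {1..N}" "\<sigma> i0 \<noteq> i0" using ne by blast
    have "\<sigma>' (p i0) \<noteq> p i0"
    proof
      assume "\<sigma>' (p i0) = p i0"
      then have "p (\<sigma> i0) = p i0" unfolding \<sigma>'_def using pp[OF i0(1)] by simp
      then have "\<sigma> i0 = i0" using inj_onD[OF inj _ sm[OF i0(1)] i0(1)] by blast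
      then show False using i0 by simp
    qed
    then have "\<exists>i\<in>{1..N}. \<sigma>' i \<noteq> i" using pp[OF i0(1)] by blast
    then obtain i' where i': "i' \<in> {1..N}" "Tsig C Nc v \<sigma>' bs i' \<noteq> Tstar C Nc v bs i'"
      using fe[OF b'] by blast
    define i where "i = p i'"
    have i: "i \<in> {1..N}" "p i = i'" using pp[OF i'(1)] i_def by auto
    have st: "Tstar C Nc v bs' i = Tstar C Nc v bs i'"
      using Tstar_valid[OF val' i(1)] Tstar_valid[OF val i'(1)] nvotes_map[OF g sub i(1)] i
      unfolding bs'_def by simp
    note gc = good_co[OF g i(1)]
    define D where "D = Nc (contest_of C Nc i)"
    have Dsub: "D \<subseteq> {1..N}" using Nc_sub co_mem[OF i(1)] D_def by blast
    have coi: "contest_of C Nc i' = contest_of C Nc (p i)" using i by simp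
    have trm: "(if \<sigma> i \<in> bs' ! b \<and>
           card {\<sigma> j | j. j \<in> Nc (contest_of C Nc i) \<and> \<sigma> j \<in> bs' ! b} \<le> v (contest_of C Nc i)
        then 1 else 0) = (if \<sigma>' i' \<in> bs ! b \<and>
           card {\<sigma>' j | j. j \<in> Nc (contest_of C Nc i') \<and> \<sigma>' j \<in> bs ! b} \<le> v (contest_of C Nc i')
        then 1 else (0::nat))" if b: "b < length bs" for b
    proof -
      define \<beta> where "\<beta> = bs ! b"
      have s: "\<beta> \<subseteq> {1..N}" using sub b \<beta>_def by auto
      have e1: "bs' ! b = p ` \<beta>" using b \<beta>_def bs'_def by simp
      have e2: "\<sigma>' i' = p (\<sigma> i)" unfolding \<sigma>'_def using i pp[OF i(1)] by auto
      have c1: "(\<sigma> i \<in> p ` \<beta>) = (\<sigma>' i' \<in> \<beta>)" using mem_img[OF g s sm[OF i(1)]] e2 by simp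
      have seteq: "{\<sigma>' j | j. j \<in> Nc (contest_of C Nc i') \<and> \<sigma>' j \<in> \<beta>} = p ` {\<sigma> j | j. j \<in> D \<and> \<sigma> j \<in> p ` \<beta>}"
      proof (intro equalityI subsetI)
        fix x assume "x \<in> {\<sigma>' j | j. j \<in> Nc (contest_of C Nc i') \<and> \<sigma>' j \<in> \<beta>}"
        then obtain j where j: "j \<in> Nc (contest_of C Nc i')" "\<sigma>' j \<in> \<beta>" "x = \<sigma>' j" by blast
        then have "j \<in> p ` D" using gc coi D_def by simp
        then obtain k where k: "k \<in> D" "j = p k" by blast
        have kN: "k \<in> {1..N}" using k Dsub by auto
        have "\<sigma>' j = p (\<sigma> k)" unfolding \<sigma>'_def using k pp[OF kN] by simp
        then have "\<sigma> k \<in> p ` \<beta>" using mem_img[OF g s sm[OF kN]] j by simp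
        then show "x \<in> p ` {\<sigma> j | j. j \<in> D \<and> \<sigma> j \<in> p ` \<beta>}"
          using k j \<open>\<sigma>' j = p (\<sigma> k)\<close> by blast
      next
        fix x assume "x \<in> p ` {\<sigma> j | j. j \<in> D \<and> \<sigma> j \<in> p ` \<beta>}"
        then obtain k where k: "k \<in> D" "\<sigma> k \<in> p ` \<beta>" "x = p (\<sigma> k)" by blast
        have kN: "k \<in> {1..N}" using k Dsub by auto
        have "p (\<sigma> k) \<in> \<beta>" using mem_img[OF g s sm[OF kN]] k by simp
        moreover have "p k \<in> Nc (contest_of C Nc i')" using gc coi D_def k by auto
        moreover have "\<sigma>' (p k) = p (\<sigma> k)" unfolding \<sigma>'_def using pp[OF kN] by simp
        ultimately show "x \<in> {\<sigma>' j | j. j \<in> Nc (contest_of C Nc i') \<and> \<sigma>' j \<in> \<beta>}"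
          using k(3) by (intro CollectI exI[of _ "p k"]) simp
      qed
      have "{\<sigma> j | j. j \<in> D \<and> \<sigma> j \<in> p ` \<beta>} \<subseteq> {1..N}" using sm Dsub by blast
      then have "inj_on p {\<sigma> j | j. j \<in> D \<and> \<sigma> j \<in> p ` \<beta>}" using inj inj_on_subset by blast
      then have c2: "card {\<sigma>' j | j. j \<in> Nc (contest_of C Nc i') \<and> \<sigma>' j \<in> \<beta>} = card {\<sigma> j | j. j \<in> D \<and> \<sigma> j \<in> p ` \<beta>}"
        unfolding seteq by (rule card_image)
      have c3: "v (contest_of C Nc i') = v (contest_of C Nc i)" using gc coi by simp
      show ?thesis using c1 c2 c3 e1 D_def \<beta>_def by simp
    qed
    have "Tsig C Nc v \<sigma> bs' i = Tsig C Nc v \<sigma>' bs i'"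
      unfolding Tsig_def using trm by (simp add: bs'_def)
    then have "Tsig C Nc v \<sigma> bs' i \<noteq> Tstar C Nc v bs' i" using st i'(2) by simp
    then show ?thesis using i(1) by blast
  qed
  show ?thesis unfolding feasible_RO_def bs'_def[symmetric]
  proof (intro conjI allI impI)
    show "\<forall>\<beta>\<in>set bs'. \<beta> \<in> valid_ballots C N Nc v" by (rule val')
  next
    fix \<sigma> assume "bij_betw \<sigma> {1..N} {1..N} \<and> (\<exists>i\<in>{1..N}. \<sigma> i \<noteq> i)"
    then show "\<exists>i\<in>{1..N}. Tsig C Nc v \<sigma> bs' i \<noteq> Tstar C Nc v bs' i" using main by blast
  qed
qed

lemma swap_exists:
  assumes c: "c \<in> {1..C}" and c': "c' \<in> {1..C}" and ne: "c \<noteq> c'"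
    and cd: "card (Nc c) = card (Nc c')" and vv: "v c = v c'"
  shows "\<exists>p. goodperm C N Nc v p \<and>
    (\<forall>m\<in>{1..card (Nc c)}. p (kth (Nc c) m) = kth (Nc c') m \<and> p (kth (Nc c') m) = kth (Nc c) m) \<and>
    (\<forall>x. x \<notin> Nc c \<and> x \<notin> Nc c' \<longrightarrow> p x = x) \<and> p ` Nc c = Nc c' \<and> p ` Nc c' = Nc c"
proof -
  define xs where "xs = sorted_list_of_set (Nc c)"
  define ys where "ys = sorted_list_of_set (Nc c')"
  define K where "K = card (Nc c)"
  have fc: "finite (Nc c)" "finite (Nc c')" using Nc_fin c c' by auto
  have sx: "set xs = Nc c" "distinct xs" "length xs = K" using fc xs_def K_def by auto
  have sy: "set ys = Nc c'" "distinct ys" "length ys = K" using fc ys_def K_def cd by auto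
  have dj: "Nc c \<inter> Nc c' = {}" using Nc_disj c c' ne by blast
  define p where "p x = (if x \<in> set xs then ys ! (THE m. m < K \<and> xs ! m = x)
     else if x \<in> set ys then xs ! (THE m. m < K \<and> ys ! m = x) else x)" for x
  have px: "p (xs ! m) = ys ! m" if m: "m < K" for m
  proof -
    have "(THE m'. m' < K \<and> xs ! m' = xs ! m) = m"
      using m sx by (intro the_equality) (auto simp: nth_eq_iff_index_eq)
    then show ?thesis unfolding p_def using m sx by auto
  qed
  have py: "p (ys ! m) = xs ! m" if m: "m < K" for m
  proof -
    have "(THE m'. m' < K \<and> ys ! m' = ys ! m) = m"
      using m sy by (intro the_equality) (auto simp: nth_eq_iff_index_eq)
    moreover have "ys ! m \<notin> set xs" using m sx sy dj by (metis disjoint_iff nth_mem)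
    ultimately show ?thesis unfolding p_def using m sy by auto
  qed
  have pid: "p x = x" if "x \<notin> Nc c" "x \<notin> Nc c'" for x
    unfolding p_def using that sx sy by auto
  have imx: "p ` Nc c = Nc c'"
  proof -
    have "p ` Nc c = p ` ((!) xs ` {..<K})" using sx by (simp add: set_conv_nth image_def) blast
    also have "\<dots> = (!) ys ` {..<K}" using px by (auto simp: image_iff)
    also have "\<dots> = Nc c'" using sy by (simp add: set_conv_nth image_def) blast
    finally show ?thesis .
  qed
  have imy: "p ` Nc c' = Nc c"
  proof -
    have "p ` Nc c' = p ` ((!) ys ` {..<K})" using sy by (simp add: set_conv_nth image_def) blast
    also have "\<dots> = (!) xs ` {..<K}" using py by (auto simp: image_iff)
    also have "\<dots> = Nc c" using sx by (simp add: set_conv_nth image_def) blast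
    finally show ?thesis .
  qed
  have inv: "p (p x) = x" for x
  proof (cases "x \<in> Nc c")
    case True
    then obtain m where "m < K" "x = xs ! m" using sx by (metis in_set_conv_nth)
    then show ?thesis using px py by simp
  next
    case False
    show ?thesis
    proof (cases "x \<in> Nc c'")
      case True
      then obtain m where "m < K" "x = ys ! m" using sy by (metis in_set_conv_nth)
      then show ?thesis using px py by simp
    next
      case False2: False
      then show ?thesis using pid False by simp
    qed
  qed
  have subN: "Nc c \<subseteq> {1..N}" "Nc c' \<subseteq> {1..N}" using Nc_sub c c' by auto
  have inN: "p x \<in> {1..N}" if "x \<in> {1..N}" for x
  proof -
    consider "x \<in> Nc c" | "x \<in> Nc c'" | "x \<notin> Nc c \<and> x \<notin> Nc c'" by blast
    then show ?thesis
    proof cases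
      case 1 then show ?thesis using imx subN by blast
    next
      case 2 then show ?thesis using imy subN by blast
    next
      case 3 then show ?thesis using pid that by simp
    qed
  qed
  have good: "goodperm C N Nc v p"
    unfolding goodperm_def
  proof (intro conjI ballI)
    fix x assume "x \<in> {1..N}" then show "p x \<in> {1..N}" using inN by blast
  next
    fix x show "p (p x) = x" by (rule inv)
  next
    fix d assume d: "d \<in> {1..C}"
    show "\<exists>d'\<in>{1..C}. p ` Nc d = Nc d' \<and> v d' = v d"
    proof (cases "d = c")
      case True then show ?thesis using imx c' vv by (intro bexI[of _ c']) auto
    next
      case False
      show ?thesis
      proof (cases "d = c'")
        case True then show ?thesis using imy c vv by (intro bexI[of _ c]) auto
      next
        case F2: False
        have "Nc d \<inter> Nc c = {}" "Nc d \<inter> Nc c' = {}" using Nc_disj[OF d c] Nc_disj[OF d c'] False F2 by auto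
        then have "\<forall>x\<in>Nc d. p x = x" using pid by blast
        then have "p ` Nc d = Nc d" by force
        then show ?thesis using d by (intro bexI[of _ d]) auto
      qed
    qed
  qed
  have kx: "kth (Nc c) m = xs ! (m - 1)" "kth (Nc c') m = ys ! (m - 1)" for m
    unfolding kth_def xs_def ys_def by auto
  have "\<forall>m\<in>{1..card (Nc c)}. p (kth (Nc c) m) = kth (Nc c') m \<and> p (kth (Nc c') m) = kth (Nc c) m"
    using px py K_def kx by auto
  then show ?thesis using good pid imx imy by (intro exI[of _ p]) simp
qed

lemma feasible_exists: "\<exists>bs. feasible_RO C N Nc v bs"
proof -
  define bs where "bs = concat (map (\<lambda>i. replicate i {i}) [1..<Suc N])"
  have setbs: "\<beta> \<in> set bs \<Longrightarrow> \<exists>i\<in>{1..N}. \<beta> = {i}" for \<beta>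
    unfolding bs_def by auto
  have vpos: "\<And>d. d \<in> {1..C} \<Longrightarrow> v d > 0" using BS unfolding ballot_style_def by blast
  have val: "\<forall>\<beta>\<in>set bs. \<beta> \<in> valid_ballots C N Nc v"
  proof
    fix \<beta> assume "\<beta> \<in> set bs"
    then obtain i where i: "i \<in> {1..N}" "\<beta> = {i}" using setbs by blast
    have "card (Nc d \<inter> \<beta>) \<le> v d" if d: "d \<in> {1..C}" for d
    proof -
      have "card (Nc d \<inter> \<beta>) \<le> card \<beta>" using i by (intro card_mono) auto
      then show ?thesis using i vpos[OF d] by simp
    qed
    then show "\<beta> \<in> valid_ballots C N Nc v" using i unfolding valid_ballots_def by auto
  qed
  have nv: "nvotes bs j = j" if "j \<in> {1..N}" for j
    using that len_filter_rep[of j N] unfolding nvotes_def bs_def length_filter_conv_card[symmetric] by simp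
  have ts: "Tsig C Nc v \<sigma> bs i = nvotes bs (\<sigma> i)" if i: "i \<in> {1..N}" for \<sigma> i
  proof -
    have "card {\<sigma> j | j. j \<in> Nc (contest_of C Nc i) \<and> \<sigma> j \<in> bs ! b} \<le> v (contest_of C Nc i)"
      if b: "b < length bs" for b
    proof -
      obtain x where x: "bs ! b = {x}" using setbs b nth_mem by blast
      have "card {\<sigma> j | j. j \<in> Nc (contest_of C Nc i) \<and> \<sigma> j \<in> bs ! b} \<le> card {x}"
        using x by (intro card_mono) auto
      then show ?thesis using vpos co_mem[OF i] by fastforce
    qed
    then have "Tsig C Nc v \<sigma> bs i = (\<Sum>b<length bs. if \<sigma> i \<in> bs ! b then 1 else 0)"
      unfolding Tsig_def by (intro sum.cong) auto
    then show ?thesis unfolding nvotes_def sum_ind .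
  qed
  have "\<exists>i\<in>{1..N}. Tsig C Nc v \<sigma> bs i \<noteq> Tstar C Nc v bs i"
    if sb: "bij_betw \<sigma> {1..N} {1..N}" and ne: "\<exists>i\<in>{1..N}. \<sigma> i \<noteq> i" for \<sigma>
  proof -
    obtain i where i: "i \<in> {1..N}" "\<sigma> i \<noteq> i" using ne by blast
    have si: "\<sigma> i \<in> {1..N}" by (rule bij_betw_apply[OF sb i(1)])
    have "Tsig C Nc v \<sigma> bs i \<noteq> Tstar C Nc v bs i"
      using ts[OF i(1)] Tstar_valid[OF val i(1)] nv[OF i(1)] nv[OF si] i(2) by simp
    then show ?thesis using i(1) by blast
  qed
  then have "feasible_RO C N Nc v bs" using val unfolding feasible_RO_def by blast
  then show ?thesis by blast
qed

lemma optimal_exists: "\<exists>bs. optimal_RO C N Nc v bs"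
proof -
  define P where "P n = (\<exists>bs. feasible_RO C N Nc v bs \<and> length bs = n)" for n
  obtain bs0 where "feasible_RO C N Nc v bs0" using feasible_exists by blast
  then have "P (length bs0)" unfolding P_def by blast
  then have "P (LEAST n. P n)" by (rule LeastI)
  then obtain bs where bs: "feasible_RO C N Nc v bs" "length bs = (LEAST n. P n)" unfolding P_def by blast
  have "length bs \<le> length bs'" if "feasible_RO C N Nc v bs'" for bs'
  proof -
    have "P (length bs')" unfolding P_def using that by blast
    then have "(LEAST n. P n) \<le> length bs'" by (rule Least_le)
    then show ?thesis using bs(2) by simp
  qed
  then show ?thesis using bs unfolding optimal_RO_def by blast
qed

lemma sum_two: assumes "c \<in> {1..C}" "c' \<in> {1..C}" "c \<noteq> c'"
  shows "(\<Sum>d\<in>{1..C}. (g::nat\<Rightarrow>nat) d) = g c + g c' + (\<Sum>d\<in>{1..C} - {c} - {c'}. g d)"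
proof -
  have "(\<Sum>d\<in>{1..C}. g d) = g c + (\<Sum>d\<in>{1..C} - {c}. g d)" using assms by (intro sum.remove) auto
  also have "(\<Sum>d\<in>{1..C} - {c}. g d) = g c' + (\<Sum>d\<in>{1..C} - {c} - {c'}. g d)" using assms by (intro sum.remove) auto
  finally show ?thesis by simp
qed

lemma main_ctx: "\<exists>bs. optimal_RO C N Nc v bs \<and>
           (\<forall>c\<in>{1..C}. \<forall>c'\<in>{1..C}. c < c' \<and> contest_equiv Nc v c c' \<longrightarrow>
              contest_prec Nc v bs c c')"
proof -
  obtain bs0 where bs0: "optimal_RO C N Nc v bs0" using optimal_exists by blast
  define L where "L = length bs0"
  define M where "M = Suc L"
  define key where "key bs d = dsum (\<lambda>m. nvotes bs (kth (Nc d) m)) M (card (Nc d))" for bs d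
  define Phi where "Phi bs = (\<Sum>d\<in>{1..C}. d * key bs d)" for bs
  define Bd where "Bd = (\<Sum>d\<in>{1..C}. d * M ^ Suc (card (Nc d)))"
  have opt_len: "length bs = L" if "optimal_RO C N Nc v bs" for bs
    using that bs0 unfolding optimal_RO_def L_def by (meson le_antisym)
  have dig: "\<forall>m. nvotes bs (kth (Nc d) m) < M" if "length bs = L" for bs d
  proof
    fix m show "nvotes bs (kth (Nc d) m) < M" using nvotes_le[of bs "kth (Nc d) m"] that M_def by simp
  qed
  have bound: "Phi bs \<le> Bd" if "optimal_RO C N Nc v bs" for bs
    unfolding Phi_def Bd_def
  proof (rule sum_mono)
    fix d assume "d \<in> {1..C}"
    have "key bs d < M ^ Suc (card (Nc d))" unfolding key_def
      by (rule dsum_bound) (rule dig[OF opt_len[OF that]])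
    then show "d * key bs d \<le> d * M ^ Suc (card (Nc d))" by simp
  qed
  have "\<forall>y. optimal_RO C N Nc v y \<longrightarrow> Phi y < Suc Bd" using bound by (simp add: le_imp_less_Suc)
  then obtain bs where bs: "optimal_RO C N Nc v bs" and maxi: "\<And>bs'. optimal_RO C N Nc v bs' \<Longrightarrow> Phi bs' \<le> Phi bs"
    using ex_has_greatest_nat[of "optimal_RO C N Nc v" bs0 Phi "Suc Bd"] bs0 by blast
  have feas: "feasible_RO C N Nc v bs" using bs unfolding optimal_RO_def by blast
  have val: "\<forall>\<beta>\<in>set bs. \<beta> \<in> valid_ballots C N Nc v" using feas unfolding feasible_RO_def by blast
  have sub: "\<forall>\<beta>\<in>set bs. \<beta> \<subseteq> {1..N}" using val unfolding valid_ballots_def by blast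
  have lenbs: "length bs = L" by (rule opt_len[OF bs(1)])
  have "contest_prec Nc v bs c c'"
    if c: "c \<in> {1..C}" and c': "c' \<in> {1..C}" and lt: "c < c'" and eqv: "contest_equiv Nc v c c'" for c c'
  proof -
    have cd: "card (Nc c) = card (Nc c')" and vv: "v c = v c'" using eqv unfolding contest_equiv_def by auto
    have ne: "c \<noteq> c'" using lt by simp
    obtain p where p: "goodperm C N Nc v p"
      "\<forall>m\<in>{1..card (Nc c)}. p (kth (Nc c) m) = kth (Nc c') m \<and> p (kth (Nc c') m) = kth (Nc c) m"
      "\<forall>x. x \<notin> Nc c \<and> x \<notin> Nc c' \<longrightarrow> p x = x" "p ` Nc c = Nc c'" "p ` Nc c' = Nc c"
      using swap_exists[OF c c' ne cd vv] by blast
    define K where "K = card (Nc c)"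
    define a where "a m = nvotes bs (kth (Nc c) m)" for m
    define b where "b m = nvotes bs (kth (Nc c') m)" for m
    have da: "\<forall>m. a m < M" using dig[OF lenbs] a_def by simp
    have db: "\<forall>m. b m < M" using dig[OF lenbs] b_def by simp
    have kc: "key bs c = dsum a M K" unfolding key_def a_def K_def by simp
    have kc': "key bs c' = dsum b M K" unfolding key_def b_def K_def cd by simp
    have fc: "finite (Nc c)" "finite (Nc c')" using Nc_fin c c' by auto
    have subc: "Nc c \<subseteq> {1..N}" "Nc c' \<subseteq> {1..N}" using Nc_sub c c' by auto
    have dj: "Nc c \<inter> Nc c' = {}" using Nc_disj c c' ne by blast
    consider "dsum a M K < dsum b M K" | "dsum a M K = dsum b M K" | "dsum b M K < dsum a M K"
      by linarith
    then show ?thesis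
    proof cases
      case 1
      then obtain k where k: "k \<in> {1..K}" "\<forall>m\<in>{k+1..K}. a m = b m" "a k < b k"
        using dsum_lex[OF da db] by blast
      have k2: "\<forall>m\<in>{k+1..card (Nc c)}. nvotes bs (kth (Nc c) m) = nvotes bs (kth (Nc c') m)"
        using k(2) unfolding a_def b_def K_def by blast
      have k3: "nvotes bs (kth (Nc c) k) < nvotes bs (kth (Nc c') k)" using k(3) unfolding a_def b_def .
      show ?thesis unfolding contest_prec_def using eqv k2 k3 k(1) K_def by blast
    next
      case 2
      then have ab: "\<forall>m\<in>{1..K}. a m = b m" using dsum_eq[OF da db] by blast
      have nvp: "nvotes bs (p i) = nvotes bs i" if i: "i \<in> {1..N}" for i
      proof -
        consider "i \<in> Nc c" | "i \<in> Nc c'" | "i \<notin> Nc c \<and> i \<notin> Nc c'" by blast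
        then show ?thesis
        proof cases
          case 1
          then obtain m where m: "m \<in> {1..card (Nc c)}" "kth (Nc c) m = i" using kth_surj fc by blast
          then show ?thesis using p(2) ab a_def b_def K_def by force
        next
          case 2
          then obtain m where m: "m \<in> {1..card (Nc c')}" "kth (Nc c') m = i" using kth_surj fc by blast
          then show ?thesis using p(2) ab a_def b_def K_def cd by force
        qed (use p(3) in auto)
      qed
      have "card (Nc c) > 0" using fc Nc_ne c by (simp add: card_gt_0_iff)
      then have one: "1 \<in> {1..card (Nc c)}" by simp
      define x0 where "x0 = kth (Nc c) 1"
      have x0: "x0 \<in> Nc c" using kth_mem[OF fc(1) one] x0_def by simp
      have "p x0 = kth (Nc c') 1" using p(2) one x0_def by blast
      moreover have "kth (Nc c') 1 \<in> Nc c'" using kth_mem[OF fc(2)] one cd by simp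
      ultimately have "p x0 \<noteq> x0" using x0 dj by auto
      moreover have "x0 \<in> {1..N}" using x0 subc by auto
      ultimately have nid: "\<exists>i\<in>{1..N}. p i \<noteq> i" by blast
      have fe: "\<And>\<sigma>. bij_betw \<sigma> {1..N} {1..N} \<Longrightarrow> (\<exists>i\<in>{1..N}. \<sigma> i \<noteq> i) \<Longrightarrow>
          \<exists>i\<in>{1..N}. Tsig C Nc v \<sigma> bs i \<noteq> Tstar C Nc v bs i"
        by (rule mp[OF spec[OF conjunct2[OF feas[unfolded feasible_RO_def]]]]) (rule conjI)
      obtain i where i: "i \<in> {1..N}" "Tsig C Nc v p bs i \<noteq> Tstar C Nc v bs i"
        using fe[OF good_bij[OF p(1)] nid] by blast
      have "Tsig C Nc v p bs i = Tstar C Nc v bs i"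
        using Tsig_good[OF val p(1) i(1)] Tstar_valid[OF val i(1)] nvp[OF i(1)] by simp
      then show ?thesis using i(2) by simp
    next
      case 3
      define bs' where "bs' = map ((`) p) bs"
      have feas': "feasible_RO C N Nc v bs'" unfolding bs'_def by (rule feasible_map[OF p(1) feas])
      have opt': "optimal_RO C N Nc v bs'"
        using feas' bs(1) unfolding optimal_RO_def bs'_def by simp
      have nv': "nvotes bs' y = nvotes bs (p y)" if "y \<in> {1..N}" for y
        unfolding bs'_def by (rule nvotes_map[OF p(1) sub that])
      have k1: "key bs' c = dsum b M K" unfolding key_def dsum_def b_def K_def
      proof (intro sum.cong refl)
        fix m assume m: "m \<in> {1..card (Nc c)}"
        have "kth (Nc c) m \<in> {1..N}" using kth_mem[OF fc(1) m] subc by auto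
        then show "nvotes bs' (kth (Nc c) m) * M ^ m = nvotes bs (kth (Nc c') m) * M ^ m"
          using nv' p(2) m by simp
      qed
      have k2: "key bs' c' = dsum a M K" unfolding key_def dsum_def a_def K_def cd
      proof (intro sum.cong refl)
        fix m assume m: "m \<in> {1..card (Nc c')}"
        have "kth (Nc c') m \<in> {1..N}" using kth_mem[OF fc(2) m] subc by auto
        then show "nvotes bs' (kth (Nc c') m) * M ^ m = nvotes bs (kth (Nc c) m) * M ^ m"
          using nv' p(2) m cd by simp
      qed
      have k3: "key bs' d = key bs d" if d: "d \<in> {1..C} - {c} - {c'}" for d
        unfolding key_def dsum_def
      proof (intro sum.cong refl)
        fix m assume m: "m \<in> {1..card (Nc d)}"
        have dC: "d \<in> {1..C}" using d by simp
        have km: "kth (Nc d) m \<in> Nc d" using kth_mem[OF Nc_fin[OF dC] m] .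
        have "Nc d \<inter> Nc c = {}" "Nc d \<inter> Nc c' = {}" using Nc_disj[OF dC c] Nc_disj[OF dC c'] d by auto
        then have "p (kth (Nc d) m) = kth (Nc d) m" using p(3) km by blast
        moreover have "kth (Nc d) m \<in> {1..N}" using km Nc_sub[OF dC] by auto
        ultimately show "nvotes bs' (kth (Nc d) m) * M ^ m = nvotes bs (kth (Nc d) m) * M ^ m"
          using nv' by simp
      qed
      have R: "(\<Sum>d\<in>{1..C} - {c} - {c'}. d * key bs' d) = (\<Sum>d\<in>{1..C} - {c} - {c'}. d * key bs d)"
        using k3 by (intro sum.cong) auto
      define R0 where "R0 = (\<Sum>d\<in>{1..C} - {c} - {c'}. d * key bs d)"
      have P1: "Phi bs = c * dsum a M K + c' * dsum b M K + R0"
        unfolding Phi_def R0_def using sum_two[OF c c' ne, of "\<lambda>d. d * key bs d"] kc kc' by simp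
      have P2: "Phi bs' = c * dsum b M K + c' * dsum a M K + R0"
        unfolding Phi_def R0_def using sum_two[OF c c' ne, of "\<lambda>d. d * key bs' d"] k1 k2 R by simp
      obtain e where e: "c' = Suc (c + e)" using less_iff_Suc_add[THEN iffD1, OF lt] by (elim exE)
      obtain f where f: "dsum a M K = Suc (dsum b M K + f)" using less_iff_Suc_add[THEN iffD1, OF 3] by (elim exE)
      have "Phi bs < Phi bs'" unfolding P1 P2 e f by (simp add: algebra_simps)
      then show ?thesis using maxi[OF opt'] by simp
    qed
  qed
  then show ?thesis using bs(1) by blast
qed

end
theorem proposition2:
  fixes C N :: nat and Nc :: "nat \<Rightarrow> nat set" and v :: "nat \<Rightarrow> nat"
  assumes "ballot_style C N Nc v"
  shows "\<exists>bs. optimal_RO C N Nc v bs \<and>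
           (\<forall>c\<in>{1..C}. \<forall>c'\<in>{1..C}. c < c' \<and> contest_equiv Nc v c c' \<longrightarrow>
              contest_prec Nc v bs c c')"
  by (rule main_ctx[OF assms])

end
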